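(* For every nonnegative integer $n$, $${}_{2}F_1\!\left[\begin{matrix}-3n & -3n+\frac12\\ & -4n+\frac23\end{matrix}\,\Big|\,\frac43\right]=\frac{1}{4^n}\,{}_{2}F_1\!\left[\begin{matrix}-n & -n+\frac12\\ & -2n+\frac56\end{matrix}\,\Big|\,1\right].$$
   Context: For complex parameters $\alpha_0,\alpha_1,\beta_1$ and $z\in\mathbb{C}$, ${}_2F_1\!\left[\begin{matrix}\alpha_0&\alpha_1\\&\beta_1\end{matrix}\Big|\,z\right]=\sum_{k\ge0}\frac{(\alpha_0)_k(\alpha_1)_k}{(\beta_1)_k}\frac{z^k}{k!}$, where $(\alpha)_0=1$ and $(\alpha)_k=\alpha(\alpha+1)\cdots(\alpha+k-1)$ for $k\ge1$. Since the first upper parameter is a nonpositive integer ($-3n$, resp. $-n$), both series terminate (at $k=3n$, resp. $k=n$), and the lower parameters are never nonpositive integers, so both sides are finite sums. *)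

theory Defs
  imports Complex_Main
begin

text \<open>Gauss hypergeometric series 2F1 as a formal sum over k; for the terminating
  instances used here (first upper parameter a nonpositive integer) all but finitely
  many terms vanish, so the sum is a finite sum.\<close>
definition hyp2F1 :: "complex \<Rightarrow> complex \<Rightarrow> complex \<Rightarrow> complex \<Rightarrow> complex" where
  "hyp2F1 a0 a1 b1 z =
     (\<Sum>k. pochhammer a0 k * pochhammer a1 k / pochhammer b1 k * z ^ k / of_nat (fact k))"

end

theory Submission imports Defs begin

lemma hyp_fin:
  assumes "m < N"
  shows "hyp2F1 (- of_nat m) a1 b1 z =
    (\<Sum>k<N. pochhammer (- of_nat m) k * pochhammer a1 k / pochhammer b1 k * z ^ k / of_nat (fact k))"
  unfolding hyp2F1_def
proof (rule suminf_finite)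
  fix k assume "k \<notin> {..<N}"
  then have "m < k" using assms by auto
  then have "pochhammer (- of_nat m :: complex) k = 0"
    by (auto simp: pochhammer_eq_0_iff)
  then show "pochhammer (- of_nat m) k * pochhammer a1 k / pochhammer b1 k * z ^ k / of_nat (fact k) = 0"
    by simp
qed simp

lemma nz1: "pochhammer (- 4 * of_nat n + 2/3 :: complex) k \<noteq> 0"
proof
  assume "pochhammer (- 4 * of_nat n + 2/3 :: complex) k = 0"
  then obtain j where "- 4 * of_nat n + 2/3 = (- of_nat j :: complex)"
    by (auto simp: pochhammer_eq_0_iff)
  then have "(of_nat (3*j+2) :: complex) = of_nat (12 * n)"
    by (simp add: field_simps)
  then have "3*j+2 = 12*n" using of_nat_eq_iff by blast
  then show False by presburger
qed

lemma nz2: "pochhammer (- 2 * of_nat n + 5/6 :: complex) k \<noteq> 0"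
proof
  assume "pochhammer (- 2 * of_nat n + 5/6 :: complex) k = 0"
  then obtain j where "- 2 * of_nat n + 5/6 = (- of_nat j :: complex)"
    by (auto simp: pochhammer_eq_0_iff)
  then have "(of_nat (6*j+5) :: complex) = of_nat (12 * n)"
    by (simp add: field_simps)
  then have "6*j+5 = 12*n" using of_nat_eq_iff by blast
  then show False by presburger
qed

lemma shiftp:
  assumes "b = a + of_nat m"
  shows "pochhammer a k * pochhammer (a + of_nat k) m = pochhammer a m * pochhammer b k"
  using pochhammer_product'[of a k m] pochhammer_product'[of a m k] assms
  by (simp add: add.commute)

lemma poch2: "pochhammer b 2 = b * (b + 1)"
  by (simp add: numeral_eq_Suc pochhammer_Suc)
lemma poch3: "pochhammer b 3 = b * (b + 1) * (b + 2)"
  by (simp add: numeral_eq_Suc pochhammer_Suc algebra_simps)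
lemma poch4: "pochhammer b 4 = b * (b + 1) * (b + 2) * (b + 3)"
  by (simp add: numeral_eq_Suc pochhammer_Suc algebra_simps)

lemma g1:
  fixes Pa Pb Q c M V F :: complex
  assumes "Pa \<noteq> 0" "Pb \<noteq> 0" "Pa * Q = c * Pb" "F \<noteq> 0"
  shows "c * (M / Pa * V / F) = M / Pb * V / F * Q"
proof -
  have c: "c = Pa * Q / Pb" using assms by (simp add: field_simps)
  show ?thesis using assms unfolding c by (simp add: field_simps)
qed

lemma g0:
  fixes P1 P2 Qa Qb ca cb R1 R2 Pb V F :: complex
  assumes "P1 * Qa = ca * R1" "P2 * Qb = cb * R2"
  shows "(ca * cb) * (R1 * R2 / Pb * V / F) = P1 * P2 / Pb * V / F * (Qa * Qb)"
proof -
  have "(ca * cb) * (R1 * R2 / Pb * V / F) = (ca * R1) * (cb * R2) * (inverse Pb * V * inverse F)"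
    by (simp add: divide_inverse algebra_simps)
  also have "\<dots> = (P1 * Qa) * (P2 * Qb) * (inverse Pb * V * inverse F)" by (simp only: assms)
  also have "\<dots> = P1 * P2 / Pb * V / F * (Qa * Qb)" by (simp add: divide_inverse algebra_simps)
  finally show ?thesis .
qed

lemma g2:
  fixes P1 P2 Pb D K F u v z V :: complex
  assumes "Pb \<noteq> 0" "D \<noteq> 0" "K \<noteq> 0" "F \<noteq> 0"
  shows "(P1*u)*(P2*v)/(Pb*D)*(z*V)/(K*F) = P1*P2/Pb*V/F * (u*v*z/(D*K))"
  using assms by (simp add: field_simps)

lemma g3:
  fixes B w D K :: complex
  assumes "D \<noteq> 0" "K \<noteq> 0"
  shows "B * (w/(D*K)) * K * D = B * w"
  using assms by (simp add: field_simps)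

definition tS :: "nat \<Rightarrow> nat \<Rightarrow> complex" where
  "tS n k = pochhammer (- 3 * of_nat n) k * pochhammer (- 3 * of_nat n + 1/2) k
     / pochhammer (- 4 * of_nat n + 2/3) k * (4/3) ^ k / of_nat (fact k)"

lemma S_sum:
  assumes "3 * n < N"
  shows "hyp2F1 (- 3 * of_nat n) (- 3 * of_nat n + 1/2) (- 4 * of_nat n + 2/3) (4/3) = (\<Sum>k<N. tS n k)"
proof -
  have e: "(- 3 * of_nat n :: complex) = - of_nat (3*n)" by simp
  show ?thesis unfolding tS_def
    using hyp_fin[OF assms, of "- 3 * of_nat n + 1/2" "- 4 * of_nat n + 2/3" "4/3"]
    by (simp only: e)
qed

lemma S_rec:
  fixes n :: nat
  defines "x \<equiv> (of_nat n :: complex)"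
  shows "-243/32*(x+1)*(2*x+1) * pochhammer (-4*x-10/3) 4 * (\<Sum>k<3*n+4. tS (Suc n) k)
       + pochhammer (-3*x-3) 3 * pochhammer (-3*x-5/2) 3 / 3 * (\<Sum>k<3*n+4. tS n k) = 0"
proof -
  define p where "p = (\<lambda>k. (-27/2 - 2175/16*x - 7371/16*x^2 - 1269/2*x^3 - 1215/4*x^4)
     + (329/32 + 3147/32*x + 3987/16*x^2 + 729/4*x^3) * k
     + (175/32 - 27/32*x - 297/16*x^2) * k^2 + (-11/2 - 6*x) * k^3 + k^4 :: complex)"
  define Pb where "Pb = (\<lambda>k. pochhammer (-4*x+2/3) k)"
  define Pa where "Pa = (\<lambda>k. pochhammer (-4*x-10/3) k)"
  define B where "B = (\<lambda>k. pochhammer (-3*x-3) k * pochhammer (-3*x-5/2) k / Pb k * (4/3) ^ k / of_nat (fact k))"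
  define G where "G = (\<lambda>k. B k * of_nat k * (of_nat k - 1/3 - 4*x) * p (of_nat k))"
  define c1 where "c1 = pochhammer (-4*x-10/3) 4"
  define c0 where "c0 = pochhammer (-3*x-3) 3 * pochhammer (-3*x-5/2) 3"
  define A where "A = -243/32*(x+1)*(2*x+1)"
  have Pbnz: "Pb k \<noteq> 0" for k unfolding Pb_def x_def using nz1[of n k] by simp
  have Panz: "Pa k \<noteq> 0" for k
  proof -
    have e: "(- 4 * of_nat (Suc n) + 2/3 :: complex) = -4*x-10/3" by (simp add: x_def algebra_simps)
    show ?thesis using nz1[of "Suc n" k] by (simp only: e Pa_def) simp
  qed
  have tS1: "tS (Suc n) k = pochhammer (-3*x-3) k * pochhammer (-3*x-5/2) k / Pa k * (4/3) ^ k / of_nat (fact k)" for k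
  proof -
    have e: "- 3 * of_nat (Suc n) = (-3*x-3 :: complex)" "-3*x-3 + 1/2 = (-3*x-5/2 :: complex)"
         "- 4 * of_nat (Suc n) + 2/3 = (-4*x-10/3 :: complex)"
      by (simp_all add: x_def algebra_simps)
    show ?thesis unfolding tS_def Pa_def by (simp only: e)
  qed
  have tS0: "tS n k = pochhammer (-3*x) k * pochhammer (-3*x+1/2) k / Pb k * (4/3) ^ k / of_nat (fact k)" for k
    unfolding tS_def Pb_def x_def by simp
  have E1: "c1 * tS (Suc n) k = B k * ((of_nat k-4*x-10/3)*(of_nat k-4*x-7/3)*(of_nat k-4*x-4/3)*(of_nat k-4*x-1/3))" for k
  proof -
    have L: "Pa k * ((of_nat k-4*x-10/3)*(of_nat k-4*x-7/3)*(of_nat k-4*x-4/3)*(of_nat k-4*x-1/3)) = c1 * Pb k"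
      using shiftp[of "-4*x+2/3" "-4*x-10/3" 4 k] unfolding Pa_def Pb_def c1_def poch4
      by (simp add: algebra_simps)
    show ?thesis unfolding tS1 B_def by (rule g1[OF Panz Pbnz L]) simp
  qed
  have E0: "c0 * tS n k = B k * ((of_nat k-3*x-3)*(of_nat k-3*x-2)*(of_nat k-3*x-1)*(of_nat k-3*x-5/2)*(of_nat k-3*x-3/2)*(of_nat k-3*x-1/2))" for k
  proof -
    have L1: "pochhammer (-3*x-3) k * ((of_nat k-3*x-3)*(of_nat k-3*x-2)*(of_nat k-3*x-1)) = pochhammer (-3*x-3) 3 * pochhammer (-3*x) k"
      using shiftp[of "-3*x" "-3*x-3" 3 k] unfolding poch3
      by (simp add: algebra_simps)
    have L2: "pochhammer (-3*x-5/2) k * ((of_nat k-3*x-5/2)*(of_nat k-3*x-3/2)*(of_nat k-3*x-1/2)) = pochhammer (-3*x-5/2) 3 * pochhammer (-3*x+1/2) k"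
      using shiftp[of "-3*x+1/2" "-3*x-5/2" 3 k] unfolding poch3
      by (simp add: algebra_simps)
    have "c0 * tS n k = B k * (((of_nat k-3*x-3)*(of_nat k-3*x-2)*(of_nat k-3*x-1))*((of_nat k-3*x-5/2)*(of_nat k-3*x-3/2)*(of_nat k-3*x-1/2)))"
      unfolding tS0 B_def c0_def by (rule g0[OF L1 L2])
    then show ?thesis by (simp only: mult.assoc)
  qed
  have E2: "B (Suc k) * (of_nat k + 1) * (of_nat k + 2/3 - 4*x) = B k * (4/3 * (of_nat k-3*x-3) * (of_nat k-3*x-5/2))" for k
  proof -
    have D: "(-4*x+2/3 + of_nat k) \<noteq> 0"
      using Pbnz[of "Suc k"] unfolding Pb_def by (simp add: pochhammer_Suc)
    have "B (Suc k) = B k * ((-3*x-3 + of_nat k)*(-3*x-5/2 + of_nat k)*(4/3)/((-4*x+2/3 + of_nat k)*of_nat (Suc k)))"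
      unfolding B_def Pb_def
      apply (simp only: pochhammer_Suc power_Suc fact_Suc of_nat_mult of_nat_id)
      apply (rule g2)
      using Pbnz[of k] D of_nat_neq_0[of k, where 'a=complex] unfolding Pb_def by simp_all
    then have "B (Suc k) * (of_nat (Suc k)) * (-4*x+2/3 + of_nat k) = B k * ((-3*x-3 + of_nat k)*(-3*x-5/2 + of_nat k)*(4/3))"
      by (simp only: g3[OF D of_nat_neq_0])
    moreover have "(of_nat (Suc k)::complex) = of_nat k + 1" "-4*x+2/3 + of_nat k = of_nat k + 2/3 - 4*x" by simp_all
    ultimately show ?thesis by (simp add: algebra_simps)
  qed
  have poly: "A * ((k-4*x-10/3)*(k-4*x-7/3)*(k-4*x-4/3)*(k-4*x-1/3))
     + 1/3 * ((k-3*x-3)*(k-3*x-2)*(k-3*x-1)*(k-3*x-5/2)*(k-3*x-3/2)*(k-3*x-1/2))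
     = 4/3*(k-3*x-3)*(k-3*x-5/2)*p (k+1) - k*(k-1/3-4*x)*p k" for k :: complex
    unfolding p_def A_def by (simp add: field_simps) (simp add: algebra_simps power2_eq_square power3_eq_cube power4_eq_xxxx)
  have tele: "A * c1 * tS (Suc n) k + c0 / 3 * tS n k = G (Suc k) - G k" for k
  proof -
    have "G (Suc k) = B (Suc k) * (of_nat k + 1) * (of_nat k + 2/3 - 4*x) * p (of_nat k + 1)"
      unfolding G_def by (simp add: algebra_simps)
    also have "\<dots> = B k * (4/3 * (of_nat k-3*x-3) * (of_nat k-3*x-5/2)) * p (of_nat k + 1)"
      by (simp add: E2)
    finally have g: "G (Suc k) - G k = B k * (4/3*(of_nat k-3*x-3)*(of_nat k-3*x-5/2)*p (of_nat k+1) - of_nat k*(of_nat k-1/3-4*x)*p (of_nat k))"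
      unfolding G_def by (simp add: algebra_simps)
    have "A * c1 * tS (Suc n) k + c0 / 3 * tS n k = A * (c1 * tS (Suc n) k) + 1/3 * (c0 * tS n k)" by simp
    also have "\<dots> = B k * (A * ((of_nat k-4*x-10/3)*(of_nat k-4*x-7/3)*(of_nat k-4*x-4/3)*(of_nat k-4*x-1/3))
     + 1/3 * ((of_nat k-3*x-3)*(of_nat k-3*x-2)*(of_nat k-3*x-1)*(of_nat k-3*x-5/2)*(of_nat k-3*x-3/2)*(of_nat k-3*x-1/2)))"
      unfolding E1 E0 by (simp add: algebra_simps)
    also have "\<dots> = G (Suc k) - G k" unfolding g poly by simp
    finally show ?thesis .
  qed
  have "G (3*n+4) = 0"
  proof -
    have e: "(-3*x-3 :: complex) = - of_nat (3*n+3)" by (simp add: x_def)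
    have "pochhammer (- of_nat (3*n+3) :: complex) (3*n+4) = 0"
      by (rule pochhammer_eq_0_iff[THEN iffD2], rule exI[of _ "3*n+3"], simp)
    then have "pochhammer (-3*x-3) (3*n+4) = 0" by (simp only: e)
    then show ?thesis unfolding G_def B_def by simp
  qed
  moreover have "G 0 = 0" unfolding G_def by simp
  ultimately have "(\<Sum>k<3*n+4. A * c1 * tS (Suc n) k + c0 / 3 * tS n k) = 0"
    unfolding tele sum_lessThan_telescope by simp
  then show ?thesis unfolding A_def c1_def c0_def sum.distrib sum_distrib_left[symmetric] by simp
qed


lemma poch1: "pochhammer b 1 = b"
  by simp

definition tU :: "nat \<Rightarrow> nat \<Rightarrow> complex" where
  "tU n k = pochhammer (- of_nat n) k * pochhammer (- of_nat n + 1/2) k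
     / pochhammer (- 2 * of_nat n + 5/6) k * 1 ^ k / of_nat (fact k)"

lemma U_sum:
  assumes "n < N"
  shows "hyp2F1 (- of_nat n) (- of_nat n + 1/2) (- 2 * of_nat n + 5/6) 1 = (\<Sum>k<N. tU n k)"
  unfolding tU_def using hyp_fin[OF assms, of "- of_nat n + 1/2" "- 2 * of_nat n + 5/6" 1] .

lemma U_rec:
  fixes n :: nat
  defines "x \<equiv> (of_nat n :: complex)"
  shows "-18*(x+1)*(2*x+1) * pochhammer (-2*x-7/6) 2 * (\<Sum>k<n+2. tU (Suc n) k)
       + 2*(3*x+2)*(6*x+1) * (pochhammer (-x-1) 1 * pochhammer (-x-1/2) 1) * (\<Sum>k<n+2. tU n k) = 0"
proof -
  define p where "p = (\<lambda>k. (-45-138*x-108*x^2)+(42+72*x)*k :: complex)"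
  define Pb where "Pb = (\<lambda>k. pochhammer (-2*x+5/6) k)"
  define Pa where "Pa = (\<lambda>k. pochhammer (-2*x-7/6) k)"
  define B where "B = (\<lambda>k. pochhammer (-x-1) k * pochhammer (-x-1/2) k / Pb k * 1 ^ k / of_nat (fact k))"
  define G where "G = (\<lambda>k. B k * of_nat k * (of_nat k - 1/6 - 2*x) * p (of_nat k))"
  define c1 where "c1 = pochhammer (-2*x-7/6) 2"
  define c0 where "c0 = pochhammer (-x-1) 1 * pochhammer (-x-1/2) 1"
  define A where "A = -18*(x+1)*(2*x+1)"
  define C where "C = 2*(3*x+2)*(6*x+1)"
  have Pbnz: "Pb k \<noteq> 0" for k unfolding Pb_def x_def using nz2[of n k] by simp
  have Panz: "Pa k \<noteq> 0" for k
  proof -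
    have e: "(- 2 * of_nat (Suc n) + 5/6 :: complex) = -2*x-7/6" by (simp add: x_def algebra_simps)
    show ?thesis using nz2[of "Suc n" k] by (simp only: e Pa_def) simp
  qed
  have tU1: "tU (Suc n) k = pochhammer (-x-1) k * pochhammer (-x-1/2) k / Pa k * 1 ^ k / of_nat (fact k)" for k
  proof -
    have e: "- of_nat (Suc n) = (-x-1 :: complex)" "-x-1 + 1/2 = (-x-1/2 :: complex)"
         "- 2 * of_nat (Suc n) + 5/6 = (-2*x-7/6 :: complex)"
      by (simp_all add: x_def algebra_simps)
    show ?thesis unfolding tU_def Pa_def by (simp only: e)
  qed
  have tU0: "tU n k = pochhammer (-x) k * pochhammer (-x+1/2) k / Pb k * 1 ^ k / of_nat (fact k)" for k
    unfolding tU_def Pb_def x_def by simp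
  have E1: "c1 * tU (Suc n) k = B k * ((of_nat k-2*x-7/6)*(of_nat k-2*x-1/6))" for k
  proof -
    have L: "Pa k * ((of_nat k-2*x-7/6)*(of_nat k-2*x-1/6)) = c1 * Pb k"
      using shiftp[of "-2*x+5/6" "-2*x-7/6" 2 k] unfolding Pa_def Pb_def c1_def poch2
      by (simp add: algebra_simps)
    show ?thesis unfolding tU1 B_def by (rule g1[OF Panz Pbnz L]) simp
  qed
  have E0: "c0 * tU n k = B k * ((of_nat k-x-1)*(of_nat k-x-1/2))" for k
  proof -
    have L1: "pochhammer (-x-1) k * (of_nat k-x-1) = pochhammer (-x-1) 1 * pochhammer (-x) k"
      using shiftp[of "-x" "-x-1" 1 k] unfolding poch1
      by (simp add: algebra_simps)
    have L2: "pochhammer (-x-1/2) k * (of_nat k-x-1/2) = pochhammer (-x-1/2) 1 * pochhammer (-x+1/2) k"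
      using shiftp[of "-x+1/2" "-x-1/2" 1 k] unfolding poch1
      by (simp add: algebra_simps)
    show ?thesis
      unfolding tU0 B_def c0_def by (rule g0[OF L1 L2])
  qed
  have E2: "B (Suc k) * (of_nat k + 1) * (of_nat k + 5/6 - 2*x) = B k * ((of_nat k-x-1) * (of_nat k-x-1/2))" for k
  proof -
    have D: "(-2*x+5/6 + of_nat k) \<noteq> 0"
      using Pbnz[of "Suc k"] unfolding Pb_def by (simp add: pochhammer_Suc)
    have "B (Suc k) = B k * ((-x-1 + of_nat k)*(-x-1/2 + of_nat k)*1/((-2*x+5/6 + of_nat k)*of_nat (Suc k)))"
      unfolding B_def Pb_def
      apply (simp only: pochhammer_Suc power_Suc fact_Suc of_nat_mult of_nat_id)
      apply (rule g2)
      using Pbnz[of k] D of_nat_neq_0[of k, where 'a=complex] unfolding Pb_def by simp_all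
    then have "B (Suc k) * (of_nat (Suc k)) * (-2*x+5/6 + of_nat k) = B k * ((-x-1 + of_nat k)*(-x-1/2 + of_nat k)*1)"
      by (simp only: g3[OF D of_nat_neq_0])
    moreover have "(of_nat (Suc k)::complex) = of_nat k + 1" "-2*x+5/6 + of_nat k = of_nat k + 5/6 - 2*x" by simp_all
    ultimately show ?thesis by (simp add: algebra_simps)
  qed
  have poly: "A * ((k-2*x-7/6)*(k-2*x-1/6)) + C*((k-x-1)*(k-x-1/2))
     = (k-x-1)*(k-x-1/2)*p (k+1) - k*(k-1/6-2*x)*p k" for k :: complex
    unfolding p_def A_def C_def by (simp add: field_simps) (simp add: algebra_simps power2_eq_square)
  have tele: "A * c1 * tU (Suc n) k + C * c0 * tU n k = G (Suc k) - G k" for k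
  proof -
    have "G (Suc k) = B (Suc k) * (of_nat k + 1) * (of_nat k + 5/6 - 2*x) * p (of_nat k + 1)"
      unfolding G_def by (simp add: algebra_simps)
    also have "\<dots> = B k * ((of_nat k-x-1) * (of_nat k-x-1/2)) * p (of_nat k + 1)"
      by (simp add: E2)
    finally have g: "G (Suc k) - G k = B k * ((of_nat k-x-1)*(of_nat k-x-1/2)*p (of_nat k+1) - of_nat k*(of_nat k-1/6-2*x)*p (of_nat k))"
      unfolding G_def by (simp add: algebra_simps)
    have "A * c1 * tU (Suc n) k + C * c0 * tU n k = A * (c1 * tU (Suc n) k) + C * (c0 * tU n k)" by simp
    also have "\<dots> = B k * (A * ((of_nat k-2*x-7/6)*(of_nat k-2*x-1/6)) + C*((of_nat k-x-1)*(of_nat k-x-1/2)))"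
      unfolding E1 E0 by (simp add: algebra_simps)
    also have "\<dots> = G (Suc k) - G k" unfolding g poly by simp
    finally show ?thesis .
  qed
  have "G (n+2) = 0"
  proof -
    have e: "(-x-1 :: complex) = - of_nat (n+1)" by (simp add: x_def)
    have "pochhammer (- of_nat (n+1) :: complex) (n+2) = 0"
      by (rule pochhammer_eq_0_iff[THEN iffD2], rule exI[of _ "n+1"], simp)
    then have "pochhammer (-x-1) (n+2) = 0" by (simp only: e)
    then show ?thesis unfolding G_def B_def by simp
  qed
  moreover have "G 0 = 0" unfolding G_def by simp
  ultimately have "(\<Sum>k<n+2. A * c1 * tU (Suc n) k + C * c0 * tU n k) = 0"
    unfolding tele sum_lessThan_telescope by simp
  then show ?thesis unfolding A_def C_def c1_def c0_def sum.distrib sum_distrib_left[symmetric] by simp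
qed


lemma ratio_id:
  fixes x :: complex
  shows "(pochhammer (-3*x-3) 3 * pochhammer (-3*x-5/2) 3 / 3) * (4 * (-18*(x+1)*(2*x+1) * pochhammer (-2*x-7/6) 2))
       = (2*(3*x+2)*(6*x+1) * (pochhammer (-x-1) 1 * pochhammer (-x-1/2) 1)) * (-243/32*(x+1)*(2*x+1) * pochhammer (-4*x-10/3) 4)"
  unfolding poch1 poch2 poch3 poch4 by (simp add: field_simps)

theorem lemma2p1:
  fixes n :: nat
  shows "hyp2F1 (- 3 * of_nat n) (- 3 * of_nat n + 1/2) (- 4 * of_nat n + 2/3) (4/3)
       = 1 / 4 ^ n * hyp2F1 (- of_nat n) (- of_nat n + 1/2) (- 2 * of_nat n + 5/6) 1"
proof (induction n)
  case 0
  show ?case using S_sum[of 0 1] U_sum[of 0 1] by (simp add: tS_def tU_def)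
next
  case (Suc n)
  define x where "x = (of_nat n :: complex)"
  define S where "S = (\<lambda>n. hyp2F1 (- 3 * of_nat n) (- 3 * of_nat n + 1/2) (- 4 * of_nat n + 2/3) (4/3 :: complex))"
  define U where "U = (\<lambda>n. hyp2F1 (- of_nat n) (- of_nat n + 1/2) (- 2 * of_nat n + 5/6) (1 :: complex))"
  define AS where "AS = -243/32*(x+1)*(2*x+1) * pochhammer (-4*x-10/3) 4"
  define CS where "CS = pochhammer (-3*x-3) 3 * pochhammer (-3*x-5/2) 3 / 3"
  define AU where "AU = -18*(x+1)*(2*x+1) * pochhammer (-2*x-7/6) 2"
  define CU where "CU = 2*(3*x+2)*(6*x+1) * (pochhammer (-x-1) 1 * pochhammer (-x-1/2) 1)"
  have rS: "AS * S (Suc n) + CS * S n = 0"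
    using S_rec[of n] S_sum[of n "3*n+4"] S_sum[of "Suc n" "3*n+4"]
    unfolding AS_def CS_def S_def x_def by simp
  have rU: "AU * U (Suc n) + CU * U n = 0"
    using U_rec[of n] U_sum[of n "n+2"] U_sum[of "Suc n" "n+2"]
    unfolding AU_def CU_def U_def x_def by simp
  have x1: "x + 1 \<noteq> 0" unfolding x_def using of_nat_neq_0[of n, where 'a=complex] by (simp add: add.commute)
  have x2: "2*x + 1 \<noteq> 0"
  proof -
    have "2*x+1 = of_nat (Suc (2*n))" by (simp add: x_def)
    then show ?thesis using of_nat_neq_0[of "2*n", where 'a=complex] by (simp add: add.commute)
  qed
  have p1: "pochhammer (-4*x-10/3) 4 \<noteq> 0"
  proof -
    have e: "(- 4 * of_nat (Suc n) + 2/3 :: complex) = -4*x-10/3" by (simp add: x_def algebra_simps)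
    show ?thesis using nz1[of "Suc n" 4] by (simp only: e) simp
  qed
  have p2: "pochhammer (-2*x-7/6) 2 \<noteq> 0"
  proof -
    have e: "(- 2 * of_nat (Suc n) + 5/6 :: complex) = -2*x-7/6" by (simp add: x_def algebra_simps)
    show ?thesis using nz2[of "Suc n" 2] by (simp only: e) simp
  qed
  have ASnz: "AS \<noteq> 0" unfolding AS_def by (intro no_zero_divisors x1 x2 p1) simp
  have AUnz: "AU \<noteq> 0" unfolding AU_def by (intro no_zero_divisors x1 x2 p2) simp
  have IH: "S n = 1 / 4 ^ n * U n" using Suc.IH unfolding S_def U_def .
  have rat: "CS * (4 * AU) = CU * AS" unfolding CS_def AU_def CU_def AS_def by (rule ratio_id)
  have rS': "AS * S (Suc n) = - (CS * S n)" using rS by (simp add: eq_neg_iff_add_eq_0)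
  have rU': "AU * U (Suc n) = - (CU * U n)" using rU by (simp add: eq_neg_iff_add_eq_0)
  have "S (Suc n) = - CS / AS * S n" using rS' ASnz by (simp add: field_simps)
  also have "\<dots> = - CS / AS * (1 / 4 ^ n * U n)" by (simp add: IH)
  also have "\<dots> = 1 / 4 ^ Suc n * (- CU / AU * U n)"
    using rat ASnz AUnz by (simp add: field_simps)
  also have "- CU / AU * U n = U (Suc n)" using rU' AUnz by (simp add: field_simps)
  finally show ?case unfolding S_def U_def .
qed

end
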